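(* Under the GoRank setting described in the context, for every node $k\in[n]$ and every iteration $t\ge 1$, $$\mathbb{E}[R'_k(t)] = \frac{1}{t}\sum_{s=0}^{t-1} \mathbf{h}_k^\top \mathbf{W}_1^{\,s}\, \mathbf{e}_k, \qquad \mathbb{E}[R_k(t)] = n\,\mathbb{E}[R'_k(t)]+1,$$ where $\mathbf{h}_k=(\mathbb{I}_{\{X_k>X_1\}},\dots,\mathbb{I}_{\{X_k>X_n\}})^\top$, $\mathbf{W}_1=\mathbf{I}_n-\frac{1}{|E|}\mathbf{L}$, and $\mathbf{e}_k$ is the $k$-th canonical basis vector of $\mathbb{R}^n$.
   Context: Let $n\ge 2$ and let $\mathcal G=(V,E)$ be a connected, non-bipartite, undirected graph with vertex set $V=[n]=\{1,\dots,n\}$; $\mathbf{A}$ is its adjacency matrix, $\mathbf{D}$ the diagonal degree matrix and $\mathbf{L}=\mathbf{D}-\mathbf{A}$ its Laplacian. Node $k$ holds a real observation $X_k$, and the $X_k$ are pairwise distinct. Algorithm GoRank: initialize $Y_k(0)=X_k$ and $R'_k(0)=0$ for all $k$. At each iteration $s=1,2,\dots$: (i) every node $k$ sets $R'_k(s)=(1-1/s)R'_k(s-1)+(1/s)\,\mathbb{I}_{\{X_k>Y_k(s-1)\}}$ and $R_k(s)=nR'_k(s)+1$; (ii) an edge $(i,j)\in E$ is drawn uniformly at random from $E$, independently of everything before; (iii) the auxiliary values are swapped: $Y_i(s)=Y_j(s-1)$, $Y_j(s)=Y_i(s-1)$, and $Y_l(s)=Y_l(s-1)$ for $l\notin\{i,j\}$.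 Expectations are over the random edge sampling. *)

theory Defs
  imports "Jordan_Normal_Form.Matrix"
begin

definition simple_graph :: "nat \<Rightarrow> nat set set \<Rightarrow> bool" where
  "simple_graph n E \<longleftrightarrow> (\<forall>e\<in>E. \<exists>i j. i \<noteq> j \<and> e = {i, j} \<and> i \<in> {1..n} \<and> j \<in> {1..n})"

definition adj_rel :: "nat set set \<Rightarrow> (nat \<times> nat) set" where
  "adj_rel E = {(i, j). {i, j} \<in> E}"

definition connected_graph :: "nat \<Rightarrow> nat set set \<Rightarrow> bool" where
  "connected_graph n E \<longleftrightarrow> (\<forall>i\<in>{1..n}. \<forall>j\<in>{1..n}. (i, j) \<in> (adj_rel E)\<^sup>*)"

definition bipartite_graph :: "nat \<Rightarrow> nat set set \<Rightarrow> bool" where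
  "bipartite_graph n E \<longleftrightarrow> (\<exists>S \<subseteq> {1..n}. \<forall>e\<in>E. \<exists>i\<in>e. \<exists>j\<in>e. i \<in> S \<and> j \<notin> S)"

text \<open>Matrices: row/column index i (0-based) corresponds to vertex i+1.\<close>

definition adj_mat :: "nat \<Rightarrow> nat set set \<Rightarrow> real mat" where
  "adj_mat n E = mat n n (\<lambda>(i, j). if {i+1, j+1} \<in> E then 1 else 0)"

definition deg_mat :: "nat \<Rightarrow> nat set set \<Rightarrow> real mat" where
  "deg_mat n E = mat n n (\<lambda>(i, j). if i = j then real (card {e\<in>E. i+1 \<in> e}) else 0)"

definition lap_mat :: "nat \<Rightarrow> nat set set \<Rightarrow> real mat" where
  "lap_mat n E = deg_mat n E - adj_mat n E"

definition W1 :: "nat \<Rightarrow> nat set set \<Rightarrow> real mat" where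
  "W1 n E = 1\<^sub>m n - (1 / real (card E)) \<cdot>\<^sub>m lap_mat n E"

definition h_vec :: "nat \<Rightarrow> (nat \<Rightarrow> real) \<Rightarrow> nat \<Rightarrow> real vec" where
  "h_vec n X k = vec n (\<lambda>i. if X k > X (i+1) then 1 else 0)"

definition e_vec :: "nat \<Rightarrow> nat \<Rightarrow> real vec" where
  "e_vec n k = unit_vec n (k - 1)"

text \<open>GoRank dynamics. A run is determined by the list es of sampled edges;
  es ! (s-1) is the edge drawn at iteration s.\<close>

definition swap_edge :: "nat set \<Rightarrow> (nat \<Rightarrow> real) \<Rightarrow> (nat \<Rightarrow> real)" where
  "swap_edge e Y = (\<lambda>l. if l \<in> e then Y (THE m. m \<in> e \<and> m \<noteq> l) else Y l)"

primrec Yaux :: "(nat \<Rightarrow> real) \<Rightarrow> nat set list \<Rightarrow> nat \<Rightarrow> (nat \<Rightarrow> real)" where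
  "Yaux X es 0 = X"
| "Yaux X es (Suc s) = swap_edge (es ! s) (Yaux X es s)"

primrec Rp :: "(nat \<Rightarrow> real) \<Rightarrow> nat set list \<Rightarrow> nat \<Rightarrow> nat \<Rightarrow> real" where
  "Rp X es k 0 = 0"
| "Rp X es k (Suc s) = (1 - 1 / real (Suc s)) * Rp X es k s
     + (1 / real (Suc s)) * (if X k > Yaux X es s k then 1 else 0)"

definition Rk :: "nat \<Rightarrow> (nat \<Rightarrow> real) \<Rightarrow> nat set list \<Rightarrow> nat \<Rightarrow> nat \<Rightarrow> real" where
  "Rk n X es k s = real n * Rp X es k s + 1"

text \<open>Expectation over t i.i.d. uniform draws from E: uniform average over all
  length-t edge sequences.\<close>

definition edge_seqs :: "nat set set \<Rightarrow> nat \<Rightarrow> nat set list set" where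
  "edge_seqs E t = {es. set es \<subseteq> E \<and> length es = t}"

definition expect :: "nat set set \<Rightarrow> nat \<Rightarrow> (nat set list \<Rightarrow> real) \<Rightarrow> real" where
  "expect E t f = (\<Sum>es\<in>edge_seqs E t. f es) / real (card (edge_seqs E t))"

end

theory Submission
  imports Defs
begin

definition tau :: "nat set \<Rightarrow> nat \<Rightarrow> nat" where
  "tau e l = (if l \<in> e then (THE m. m \<in> e \<and> m \<noteq> l) else l)"

primrec sig :: "nat set list \<Rightarrow> nat \<Rightarrow> nat \<Rightarrow> nat" where
  "sig es 0 k = k"
| "sig es (Suc s) k = sig es s (tau (es ! s) k)"

lemma Yaux_sig: "Yaux X es s = (\<lambda>l. X (sig es s l))"
  by (induction s) (auto simp: swap_edge_def tau_def fun_eq_iff)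

lemma tau_pair1: "i \<noteq> j \<Longrightarrow> tau {i, j} i = j"
  unfolding tau_def by (auto intro!: the_equality)
lemma tau_pair2: "i \<noteq> j \<Longrightarrow> tau {i, j} j = i"
  unfolding tau_def by (auto intro!: the_equality)
lemma tau_out: "l \<notin> e \<Longrightarrow> tau e l = l"
  unfolding tau_def by auto

lemma tau_range:
  assumes "simple_graph n E" "e \<in> E" "k \<in> {1..n}"
  shows "tau e k \<in> {1..n}"
proof -
  obtain i j where "i \<noteq> j" "e = {i,j}" "i \<in> {1..n}" "j \<in> {1..n}"
    using assms unfolding simple_graph_def by blast
  then show ?thesis using assms(3) tau_pair1 tau_pair2 tau_out by (metis insertCI insertE singletonD)
qed

lemma sig_append: "s \<le> length es \<Longrightarrow> sig (es @ xs) s k = sig es s k"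
  by (induction s arbitrary: k) (auto simp: nth_append)

lemma sig_range:
  assumes "simple_graph n E" "set es \<subseteq> E"
  shows "s \<le> length es \<Longrightarrow> k \<in> {1..n} \<Longrightarrow> sig es s k \<in> {1..n}"
proof (induction s arbitrary: k)
  case 0 then show ?case by simp
next
  case (Suc s)
  have "es ! s \<in> E" using Suc.prems assms(2) by (simp add: subset_iff)
  then have "tau (es ! s) k \<in> {1..n}" using tau_range[OF assms(1)] Suc.prems by blast
  then show ?case using Suc by simp
qed

lemma finite_E: "simple_graph n E \<Longrightarrow> finite E"
proof -
  assume "simple_graph n E"
  then have "E \<subseteq> Pow {1..n}" unfolding simple_graph_def by auto
  then show ?thesis by (meson finite_Pow_iff finite_atLeastAtMost finite_subset)
qed

lemma W1_carrier: "W1 n E \<in> carrier_mat n n"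
  unfolding W1_def lap_mat_def deg_mat_def adj_mat_def by auto

lemma W1_entry:
  assumes "i \<in> {1..n}" "k \<in> {1..n}"
  shows "W1 n E $$ (i-1, k-1) = (if i = k then 1 else 0)
     - (1 / real (card E)) * ((if i = k then real (card {e\<in>E. k \<in> e}) else 0) - (if {i,k} \<in> E then 1 else 0))"
  using assms unfolding W1_def lap_mat_def deg_mat_def adj_mat_def by auto


lemma edge_seqs_Suc: "edge_seqs E (Suc t) = (\<lambda>(es, e). es @ [e]) ` (edge_seqs E t \<times> E)"
proof (rule equalityI; rule subsetI)
  fix xs assume xs: "xs \<in> edge_seqs E (Suc t)"
  then have ne: "xs \<noteq> []" and st: "set xs \<subseteq> E" and l: "length xs = Suc t" unfolding edge_seqs_def by auto
  have 1: "xs = butlast xs @ [last xs]" using ne by simp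
  have 2: "butlast xs \<in> edge_seqs E t" using st l unfolding edge_seqs_def
    by (auto dest: in_set_butlastD)
  have 3: "last xs \<in> E" using st ne last_in_set by blast
  show "xs \<in> (\<lambda>(es, e). es @ [e]) ` (edge_seqs E t \<times> E)"
    using 1 2 3 by (intro image_eqI[where x = "(butlast xs, last xs)"]) auto
next
  fix xs assume "xs \<in> (\<lambda>(es, e). es @ [e]) ` (edge_seqs E t \<times> E)"
  then show "xs \<in> edge_seqs E (Suc t)" by (auto simp: edge_seqs_def)
qed

lemma sum_edge_seqs_Suc:
  "(\<Sum>xs\<in>edge_seqs E (Suc t). f xs) = (\<Sum>es\<in>edge_seqs E t. \<Sum>e\<in>E. f (es @ [e]))"
proof -
  have "inj_on (\<lambda>(es, e). es @ [e]) (edge_seqs E t \<times> E)"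
    by (auto simp: inj_on_def)
  then have "(\<Sum>xs\<in>edge_seqs E (Suc t). f xs) = (\<Sum>p\<in>edge_seqs E t \<times> E. f ((\<lambda>(es, e). es @ [e]) p))"
    unfolding edge_seqs_Suc by (rule sum.reindex[unfolded comp_def])
  also have "\<dots> = (\<Sum>es\<in>edge_seqs E t. \<Sum>e\<in>E. f (es @ [e]))"
    by (simp add: sum.cartesian_product split_def)
  finally show ?thesis .
qed

lemma edge_seqs_length: "es \<in> edge_seqs E t \<Longrightarrow> length es = t"
  unfolding edge_seqs_def by auto

lemma no_loop: assumes "simple_graph n E" shows "{k} \<notin> E"
proof
  assume "{k} \<in> E"
  then obtain i j where "i \<noteq> j" "{k} = {i,j}" using assms unfolding simple_graph_def by blast
  then show False by (metis insertI1 insert_commute singletonD)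
qed

lemma one_step:
  assumes sg: "simple_graph n E" and k: "k \<in> {1..n}" and cE: "card E > 0"
  shows "(\<Sum>e\<in>E. g (tau e k)) = (\<Sum>i\<in>{1..n}. g i * (real (card E) * W1 n E $$ (i-1, k-1)))"
proof -
  have fin: "finite E" using finite_E[OF sg] .
  define A where "A = {e\<in>E. k \<in> e}"
  have AE: "A \<subseteq> E" unfolding A_def by auto
  have "(\<Sum>e\<in>E. g (tau e k)) = (\<Sum>e\<in>A. g (tau e k)) + (\<Sum>e\<in>E - A. g (tau e k))"
    using fin AE by (metis sum.subset_diff add.commute)
  also have "(\<Sum>e\<in>E - A. g (tau e k)) = real (card E - card A) * g k"
    using fin AE by (simp add: A_def tau_out card_Diff_subset)
  also have "(\<Sum>e\<in>A. g (tau e k)) = (\<Sum>i\<in>{i\<in>{1..n}. {i,k} \<in> E}. g i)"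
  proof (rule sum.reindex_bij_witness[where i = "\<lambda>i. {i,k}" and j = "\<lambda>e. tau e k"])
    fix i assume i: "i \<in> {i\<in>{1..n}. {i,k} \<in> E}"
    then have "i \<noteq> k" using no_loop[OF sg] by auto
    then show "tau {i,k} k = i" by (rule tau_pair2)
    show "{i,k} \<in> A" using i by (auto simp: A_def)
  next
    fix e assume e: "e \<in> A"
    have eE: "e \<in> E" and ke: "k \<in> e" using e unfolding A_def by auto
    from sg eE obtain a b where ab0: "a \<noteq> b" "e = {a,b}" "a \<in> {1..n}" "b \<in> {1..n}"
      unfolding simple_graph_def by blast
    note ab = ab0 eE ke
    have te: "{tau e k, k} = e \<and> tau e k \<in> {1..n}"
    proof (cases "k = a")
      case True
      then show ?thesis using ab tau_pair1[of a b] by (simp add: insert_commute)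
    next
      case False
      then have "k = b" using ab by auto
      then show ?thesis using ab tau_pair2[of a b] by simp
    qed
    then show "{tau e k, k} = e" by simp
    show "tau e k \<in> {i\<in>{1..n}. {i,k} \<in> E}" using te ab by simp
    show "g (tau e k) = g (tau e k)" by simp
  qed
  also have "(\<Sum>i\<in>{i\<in>{1..n}. {i,k} \<in> E}. g i) = (\<Sum>i\<in>{1..n}. g i * (if {i,k} \<in> E then 1 else 0))"
    by (simp add: sum.inter_filter[symmetric] if_distrib cong: if_cong)
  finally have L: "(\<Sum>e\<in>E. g (tau e k)) = (\<Sum>i\<in>{1..n}. g i * (if {i,k} \<in> E then 1 else 0)) + real (card E - card A) * g k" .
  have kk: "{k,k} \<notin> E" using no_loop[OF sg] by simp
  have ent: "i \<in> {1..n} \<Longrightarrow> real (card E) * W1 n E $$ (i-1, k-1) = (if i = k then real (card E) - real (card A) else 0) + (if {i,k} \<in> E then 1 else 0)" for i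
    using W1_entry[OF _ k, of i E] cE kk by (auto simp: A_def field_simps)
  have "(\<Sum>i\<in>{1..n}. g i * (real (card E) * W1 n E $$ (i-1, k-1)))
      = (\<Sum>i\<in>{1..n}. g i * (if i = k then real (card E) - real (card A) else 0)) + (\<Sum>i\<in>{1..n}. g i * (if {i,k} \<in> E then 1 else 0))"
    unfolding sum.distrib[symmetric]
  proof (rule sum.cong)
    fix i assume i: "i \<in> {1..n}"
    show "g i * (real (card E) * W1 n E $$ (i-1, k-1)) = g i * (if i = k then real (card E) - real (card A) else 0) + g i * (if {i,k} \<in> E then 1 else 0)"
      by (subst ent[OF i]) (simp add: distrib_left)
  qed simp
  also have "(\<Sum>i\<in>{1..n}. g i * (if i = k then real (card E) - real (card A) else 0)) = g k * (real (card E) - real (card A))"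
    using k by (simp add: if_distrib cong: if_cong)
  finally show ?thesis using L card_mono[OF fin AE] by (simp add: of_nat_diff algebra_simps)
qed

lemma sum_shift1: "(\<Sum>i\<in>{1..n}. f (i-1::nat)) = (\<Sum>i<n. (f i :: real))"
  using sum.atLeast1_atMost_eq[where g = "\<lambda>i. f (i-1)" and n = n] by simp

lemma mult_W_entry:
  assumes "j \<in> {1..n}" "k \<in> {1..n}"
  shows "(W1 n E ^\<^sub>m t * W1 n E) $$ (j-1, k-1) = (\<Sum>i\<in>{1..n}. (W1 n E ^\<^sub>m t) $$ (j-1, i-1) * W1 n E $$ (i-1, k-1))"
proof -
  have C: "W1 n E \<in> carrier_mat n n" by (rule W1_carrier)
  have Ct: "W1 n E ^\<^sub>m t \<in> carrier_mat n n" using C by simp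
  have d: "dim_row (W1 n E) = n" "dim_col (W1 n E) = n" "dim_row (W1 n E ^\<^sub>m t) = n" "dim_col (W1 n E ^\<^sub>m t) = n"
    using C Ct by auto
  have "(W1 n E ^\<^sub>m t * W1 n E) $$ (j-1, k-1) = row (W1 n E ^\<^sub>m t) (j-1) \<bullet> col (W1 n E) (k-1)"
    using assms d by (subst index_mult_mat(1)) auto
  also have "\<dots> = (\<Sum>i<n. (W1 n E ^\<^sub>m t) $$ (j-1, i) * W1 n E $$ (i, k-1))"
    unfolding scalar_prod_def
  proof (rule sum.cong)
    show "{0..<dim_vec (col (W1 n E) (k - 1))} = {..<n}" using d by auto
    fix i assume i: "i \<in> {..<n}"
    have "row (W1 n E ^\<^sub>m t) (j - 1) $ i = (W1 n E ^\<^sub>m t) $$ (j-1, i)"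
      using i assms d by (intro index_row(1)) auto
    moreover have "col (W1 n E) (k - 1) $ i = W1 n E $$ (i, k-1)"
      using i assms d by (intro index_col) auto
    ultimately show "row (W1 n E ^\<^sub>m t) (j - 1) $ i * col (W1 n E) (k - 1) $ i = (W1 n E ^\<^sub>m t) $$ (j-1, i) * W1 n E $$ (i, k-1)"
      by simp
  qed
  also have "\<dots> = (\<Sum>i\<in>{1..n}. (W1 n E ^\<^sub>m t) $$ (j-1, i-1) * W1 n E $$ (i-1, k-1))"
    by (rule sum_shift1[where f = "\<lambda>i. (W1 n E ^\<^sub>m t) $$ (j-1, i) * W1 n E $$ (i, k-1)", symmetric])
  finally show ?thesis .
qed

lemma count_lemma:
  assumes sg: "simple_graph n E" and cE: "card E > 0"
  shows "s \<le> t \<Longrightarrow> k \<in> {1..n} \<Longrightarrow> j \<in> {1..n} \<Longrightarrow>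
    (\<Sum>es\<in>edge_seqs E t. (if sig es s k = j then 1 else 0::real)) = real (card E)^t * (W1 n E ^\<^sub>m s) $$ (j-1,k-1)"
proof (induction t arbitrary: s k)
  case 0
  then have s0: "s = 0" by simp
  have "edge_seqs E 0 = {[]}" unfolding edge_seqs_def by auto
  have d: "dim_row (W1 n E) = n" using W1_carrier[of n E] by auto
  have "(W1 n E ^\<^sub>m s) $$ (j-1,k-1) = (if j = k then 1 else 0)"
    using 0 s0 d by (auto simp add: index_one_mat(1))
  then show ?case using \<open>edge_seqs E 0 = {[]}\<close> s0 by simp
next
  case (Suc t)
  have "(\<Sum>es\<in>edge_seqs E (Suc t). (if sig es s k = j then 1 else 0::real))
      = (\<Sum>es\<in>edge_seqs E t. \<Sum>e\<in>E. (if sig (es @ [e]) s k = j then 1 else 0::real))"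
    by (rule sum_edge_seqs_Suc)
  show ?case
  proof (cases "s \<le> t")
    case True
    have "(\<Sum>es\<in>edge_seqs E t. \<Sum>e\<in>E. (if sig (es @ [e]) s k = j then 1 else 0::real))
        = (\<Sum>es\<in>edge_seqs E t. real (card E) * (if sig es s k = j then 1 else 0::real))"
      using True by (intro sum.cong refl) (simp add: sig_append edge_seqs_length)
    also have "\<dots> = real (card E) * (real (card E)^t * (W1 n E ^\<^sub>m s) $$ (j-1,k-1))"
      using Suc True by (simp add: sum_distrib_left[symmetric])
    finally show ?thesis using \<open>(\<Sum>es\<in>edge_seqs E (Suc t). _) = _\<close> by simp
  next
    case False
    then have s: "s = Suc t" using Suc.prems by simp
    have "(\<Sum>es\<in>edge_seqs E t. \<Sum>e\<in>E. (if sig (es @ [e]) s k = j then 1 else 0::real))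
        = (\<Sum>es\<in>edge_seqs E t. \<Sum>e\<in>E. (if sig es t (tau e k) = j then 1 else 0::real))"
      using s by (intro sum.cong refl) (simp add: sig_append edge_seqs_length nth_append)
    also have "\<dots> = (\<Sum>e\<in>E. \<Sum>es\<in>edge_seqs E t. (if sig es t (tau e k) = j then 1 else 0::real))"
      by (rule sum.swap)
    also have "\<dots> = (\<Sum>e\<in>E. real (card E)^t * (W1 n E ^\<^sub>m t) $$ (j-1, tau e k - 1))"
      using Suc.IH[of t] Suc.prems tau_range[OF sg] by (intro sum.cong refl) simp
    also have "\<dots> = real (card E)^t * (\<Sum>e\<in>E. (W1 n E ^\<^sub>m t) $$ (j-1, tau e k - 1))"
      by (simp add: sum_distrib_left)
    also have "(\<Sum>e\<in>E. (W1 n E ^\<^sub>m t) $$ (j-1, tau e k - 1))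
       = (\<Sum>i\<in>{1..n}. (W1 n E ^\<^sub>m t) $$ (j-1, i-1) * (real (card E) * W1 n E $$ (i-1, k-1)))"
      by (rule one_step[OF sg Suc.prems(2) cE, where g = "\<lambda>i. (W1 n E ^\<^sub>m t) $$ (j-1, i-1)"])
    also have "\<dots> = real (card E) * (W1 n E ^\<^sub>m s) $$ (j-1,k-1)"
      unfolding s pow_mat.simps mult_W_entry[OF Suc.prems(3,2)]
      by (simp add: sum_distrib_left algebra_simps)
    finally show ?thesis using \<open>(\<Sum>es\<in>edge_seqs E (Suc t). _) = _\<close> by simp
  qed
qed

lemma Rp_sum: "real t * Rp X es k t = (\<Sum>s<t. if X k > Yaux X es s k then 1 else 0)"
proof (induction t)
  case 0 then show ?case by simp
next
  case (Suc t)
  have a: "real (Suc t) * (1 - 1 / real (Suc t)) = real t" by (simp add: field_simps)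
  have b: "real (Suc t) * (1 / real (Suc t)) = 1" by simp
  have "real (Suc t) * Rp X es k (Suc t) = real t * Rp X es k t + (if X k > Yaux X es t k then 1 else 0)"
    unfolding Rp.simps distrib_left mult.assoc[symmetric] a b by simp
  then show ?case using Suc by simp
qed

lemma card_pos:
  assumes "n \<ge> 2" "simple_graph n E" "connected_graph n E"
  shows "card E > 0"
proof -
  have "(1, 2) \<in> (adj_rel E)\<^sup>*" using assms unfolding connected_graph_def by auto
  then obtain y where "(1, y) \<in> adj_rel E"
    by (metis converse_rtranclE numeral_One numeral_eq_iff semiring_norm(85))
  then have "E \<noteq> {}" unfolding adj_rel_def by auto
  then show ?thesis using finite_E[OF assms(2)] by (simp add: card_gt_0_iff)
qed

lemma ind_sum:
  assumes sg: "simple_graph n E" and cE: "card E > 0" and k: "k \<in> {1..n}" and st: "s < t"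
  shows "(\<Sum>es\<in>edge_seqs E t. (if X k > Yaux X es s k then 1 else 0::real))
     = real (card E)^t * (h_vec n X k \<bullet> ((W1 n E ^\<^sub>m s) *\<^sub>v e_vec n k))"
proof -
  have "(\<Sum>es\<in>edge_seqs E t. (if X k > Yaux X es s k then 1 else 0::real))
     = (\<Sum>es\<in>edge_seqs E t. \<Sum>j\<in>{1..n}. (if sig es s k = j then 1 else 0) * (if X k > X j then 1 else 0::real))"
  proof (rule sum.cong[OF refl])
    fix es assume es: "es \<in> edge_seqs E t"
    then have r: "sig es s k \<in> {1..n}"
      using sig_range[OF sg, of es s k] k st unfolding edge_seqs_def by auto
    have "(\<Sum>j\<in>{1..n}. (if sig es s k = j then 1 else 0) * (if X k > X j then 1 else 0::real))
        = (\<Sum>j\<in>{1..n}. if sig es s k = j then (if X k > X j then 1 else 0::real) else 0)"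
      by (intro sum.cong refl) simp
    also have "\<dots> = (if X k > X (sig es s k) then 1 else 0)"
      using r by (simp add: sum.delta)
    finally show "(if X k > Yaux X es s k then 1 else 0::real) = (\<Sum>j\<in>{1..n}. (if sig es s k = j then 1 else 0) * (if X k > X j then 1 else 0::real))"
      by (simp add: Yaux_sig)
  qed
  also have "\<dots> = (\<Sum>j\<in>{1..n}. (\<Sum>es\<in>edge_seqs E t. (if sig es s k = j then 1 else 0)) * (if X k > X j then 1 else 0::real))"
    by (subst sum.swap) (simp add: sum_distrib_right)
  also have "\<dots> = (\<Sum>j\<in>{1..n}. real (card E)^t * (W1 n E ^\<^sub>m s) $$ (j-1,k-1) * (if X k > X j then 1 else 0::real))"
    using count_lemma[OF sg cE, of s t k] st k by (intro sum.cong refl) simp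
  also have "\<dots> = real (card E)^t * (\<Sum>j\<in>{1..n}. (if X k > X ((j-1)+1) then 1 else 0::real) * (W1 n E ^\<^sub>m s) $$ (j-1,k-1))"
    by (simp add: sum_distrib_left mult_ac)
  also have "(\<Sum>j\<in>{1..n}. (if X k > X ((j-1)+1) then 1 else 0::real) * (W1 n E ^\<^sub>m s) $$ (j-1,k-1))
      = (\<Sum>i<n. (if X k > X (i+1) then 1 else 0::real) * (W1 n E ^\<^sub>m s) $$ (i,k-1))"
    by (rule sum_shift1[where f = "\<lambda>i. (if X k > X (i+1) then 1 else 0::real) * (W1 n E ^\<^sub>m s) $$ (i,k-1)"])
  also have "\<dots> = h_vec n X k \<bullet> ((W1 n E ^\<^sub>m s) *\<^sub>v e_vec n k)"
  proof -
    have C: "W1 n E ^\<^sub>m s \<in> carrier_mat n n" using W1_carrier by simp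
    have k1: "k - 1 < n" using k by auto
    have "h_vec n X k \<bullet> ((W1 n E ^\<^sub>m s) *\<^sub>v e_vec n k)
        = (\<Sum>i\<in>{0..<n}. h_vec n X k $ i * ((W1 n E ^\<^sub>m s) *\<^sub>v e_vec n k) $ i)"
    proof -
      have "dim_vec ((W1 n E ^\<^sub>m s) *\<^sub>v e_vec n k) = n" using W1_carrier[of n E] by simp
      then show ?thesis by (simp only: scalar_prod_def)
    qed
    also have "\<dots> = (\<Sum>i<n. (if X k > X (i+1) then 1 else 0::real) * (W1 n E ^\<^sub>m s) $$ (i,k-1))"
    proof (rule sum.cong)
      show "{0..<n} = {..<n}" by auto
      fix i assume i: "i \<in> {..<n}"
      have "((W1 n E ^\<^sub>m s) *\<^sub>v e_vec n k) $ i = row (W1 n E ^\<^sub>m s) i \<bullet> unit_vec n (k-1)"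
        using i C unfolding e_vec_def by (subst index_mult_mat_vec) auto
      also have "\<dots> = row (W1 n E ^\<^sub>m s) i $ (k-1)" using k1 by simp
      also have "\<dots> = (W1 n E ^\<^sub>m s) $$ (i,k-1)" using i k1 C by (intro index_row(1)) auto
      finally show "h_vec n X k $ i * ((W1 n E ^\<^sub>m s) *\<^sub>v e_vec n k) $ i = (if X k > X (i+1) then 1 else 0::real) * (W1 n E ^\<^sub>m s) $$ (i,k-1)"
        using i unfolding h_vec_def by simp
    qed
    finally show ?thesis by simp
  qed
  finally show ?thesis .
qed

theorem mainTheorem1:
  fixes n :: nat and E :: "nat set set" and X :: "nat \<Rightarrow> real"
  assumes "n \<ge> 2"
    and "simple_graph n E"
    and "connected_graph n E"
    and "\<not> bipartite_graph n E"
    and "inj_on X {1..n}"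
    and "k \<in> {1..n}"
    and "t \<ge> 1"
  shows "expect E t (\<lambda>es. Rp X es k t)
           = (1 / real t) * (\<Sum>s<t. h_vec n X k \<bullet> ((W1 n E ^\<^sub>m s) *\<^sub>v e_vec n k))
       \<and> expect E t (\<lambda>es. Rk n X es k t) = real n * expect E t (\<lambda>es. Rp X es k t) + 1"
proof -
  have sg: "simple_graph n E" by fact
  have cE: "card E > 0" using card_pos assms(1-3) by blast
  have fin: "finite E" using finite_E[OF sg] .
  have card: "card (edge_seqs E t) = card E ^ t"
    unfolding edge_seqs_def by (rule card_lists_length_eq[OF fin])
  have cpos: "real (card E) ^ t > 0" using cE by simp
  have tpos: "real t > 0" using assms(7) by simp
  have Rpe: "Rp X es k t = (1 / real t) * (\<Sum>s<t. if X k > Yaux X es s k then 1 else 0)" for es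
    using Rp_sum[of t X es k] tpos by (simp add: field_simps)
  have "(\<Sum>es\<in>edge_seqs E t. Rp X es k t)
      = (1 / real t) * (\<Sum>s<t. \<Sum>es\<in>edge_seqs E t. if X k > Yaux X es s k then 1 else 0)"
    unfolding Rpe by (subst sum.swap) (simp add: sum_distrib_left)
  also have "\<dots> = (1 / real t) * (\<Sum>s<t. real (card E)^t * (h_vec n X k \<bullet> ((W1 n E ^\<^sub>m s) *\<^sub>v e_vec n k)))"
    using ind_sum[OF sg cE assms(6)] by simp
  finally have S: "(\<Sum>es\<in>edge_seqs E t. Rp X es k t) = real (card E)^t * ((1 / real t) * (\<Sum>s<t. h_vec n X k \<bullet> ((W1 n E ^\<^sub>m s) *\<^sub>v e_vec n k)))"
    by (simp add: sum_distrib_left)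
  have 1: "expect E t (\<lambda>es. Rp X es k t) = (1 / real t) * (\<Sum>s<t. h_vec n X k \<bullet> ((W1 n E ^\<^sub>m s) *\<^sub>v e_vec n k))"
    unfolding expect_def S card using cpos by simp
  have 2: "expect E t (\<lambda>es. Rk n X es k t) = real n * expect E t (\<lambda>es. Rp X es k t) + 1"
  proof -
    have "(\<Sum>es\<in>edge_seqs E t. Rk n X es k t) = real n * (\<Sum>es\<in>edge_seqs E t. Rp X es k t) + real (card (edge_seqs E t))"
      by (simp add: Rk_def sum.distrib sum_distrib_left)
    moreover have "real (card (edge_seqs E t)) > 0" using card cpos by simp
    ultimately show ?thesis unfolding expect_def by (simp add: field_simps)
  qed
  show ?thesis using 1 2 by blast
qed

end
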